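(* The persistency of entanglement of the $N$-singlet $|S^{(N)}_N\rangle\in(\mathbb{C}^N)^{\otimes N}$ is $N-1$. Equivalently, whatever the choice of single-qudit von Neumann measurements and whatever their outcomes, $N-1$ measurements on distinct qudits are needed to leave the state completely disentangled (fully product).
   Context: The $N$-singlet is the totally antisymmetric state $|S^{(N)}_N\rangle=\frac{1}{\sqrt{N!}}\sum_{\pi\in S_N}\operatorname{sgn}(\pi)|\alpha_{\pi(1)},\dots,\alpha_{\pi(N)}\rangle$ for an orthonormal basis $\{|\alpha_i\rangle\}$ of $\mathbb{C}^N$. The persistency of entanglement of a multipartite pure state is the minimal number of local (single-subsystem) von Neumann measurements that, for all measurement outcomes, leave the state completely disentangled. *)

theory Defs
  imports "HOL-Analysis.Analysis" "HOL-Combinatorics.Permutations"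
begin

text \<open>Pure states of N qudits, each with Hilbert space C^N, are represented by their
  (unnormalised) coefficient functions on the computational product basis.
  A basis index is a list xs of length N with entries in {0..<N};
  xs ! i is the local basis index of qudit i.  Values outside idx N are irrelevant.\<close>

type_synonym qstate = "nat list \<Rightarrow> complex"

definition idx :: "nat \<Rightarrow> nat list set" where
  "idx N = {xs. length xs = N \<and> set xs \<subseteq> {..<N}}"

definition ket :: "nat list \<Rightarrow> qstate" where
  "ket ys = (\<lambda>xs. if xs = ys then 1 else 0)"

text \<open>The N-singlet: (1/sqrt N!) times the sum over permutations pi of {0..<N}
  of sgn(pi) |pi(0),...,pi(N-1)>, written with the computational basis
  as the orthonormal basis alpha.\<close>
definition singlet :: "nat \<Rightarrow> qstate" where
  "singlet N = (\<lambda>xs. complex_of_real (1 / sqrt (fact N)) *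
     (\<Sum>p\<in>{p. p permutes {..<N}}. of_int (sign p) * ket (map p [0..<N]) xs))"

text \<open>An orthonormal basis of C^N: b j is the j-th basis vector (j < N),
  b j i its i-th component.\<close>
definition orthonormal_basis :: "nat \<Rightarrow> (nat \<Rightarrow> nat \<Rightarrow> complex) \<Rightarrow> bool" where
  "orthonormal_basis N b \<longleftrightarrow>
     (\<forall>j<N. \<forall>k<N. (\<Sum>i<N. cnj (b j i) * b k i) = (if j = k then 1 else 0))"

text \<open>Post-measurement (unnormalised) state: the qudits q in M are measured by the
  von Neumann measurement in the orthonormal basis B q, with outcome out q, i.e. the
  rank-one projector |B q (out q)><B q (out q)| acting on qudit q, tensored over q in M,
  applied to psi.\<close>
definition post_measure ::
  "nat \<Rightarrow> nat set \<Rightarrow> (nat \<Rightarrow> nat \<Rightarrow> nat \<Rightarrow> complex) \<Rightarrow> (nat \<Rightarrow> nat) \<Rightarrow> qstate \<Rightarrow> qstate" where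
  "post_measure N M B out psi = (\<lambda>xs.
     \<Sum>ys\<in>{ys\<in>idx N. \<forall>i<N. i \<notin> M \<longrightarrow> ys ! i = xs ! i}.
        (\<Prod>q\<in>M. B q (out q) (xs ! q) * cnj (B q (out q) (ys ! q))) * psi ys)"

definition fully_product :: "nat \<Rightarrow> qstate \<Rightarrow> bool" where
  "fully_product N psi \<longleftrightarrow>
     (\<exists>v :: nat \<Rightarrow> nat \<Rightarrow> complex. \<forall>xs\<in>idx N. psi xs = (\<Prod>i<N. v i (xs ! i)))"

definition nonzero_state :: "nat \<Rightarrow> qstate \<Rightarrow> bool" where
  "nonzero_state N psi \<longleftrightarrow> (\<exists>xs\<in>idx N. psi xs \<noteq> 0)"

definition valid_measurements :: "nat \<Rightarrow> nat set \<Rightarrow> (nat \<Rightarrow> nat \<Rightarrow> nat \<Rightarrow> complex) \<Rightarrow> bool" where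
  "valid_measurements N M B \<longleftrightarrow> M \<subseteq> {..<N} \<and> (\<forall>q\<in>M. orthonormal_basis N (B q))"

definition valid_outcomes :: "nat \<Rightarrow> nat set \<Rightarrow> (nat \<Rightarrow> nat) \<Rightarrow> bool" where
  "valid_outcomes N M out \<longleftrightarrow> (\<forall>q\<in>M. out q < N)"

definition disentangles :: "nat \<Rightarrow> qstate \<Rightarrow> nat set \<Rightarrow> (nat \<Rightarrow> nat \<Rightarrow> nat \<Rightarrow> complex) \<Rightarrow> bool" where
  "disentangles N psi M B \<longleftrightarrow> valid_measurements N M B \<and>
     (\<forall>out. valid_outcomes N M out \<longrightarrow> fully_product N (post_measure N M B out psi))"

definition persistency :: "nat \<Rightarrow> qstate \<Rightarrow> nat" where
  "persistency N psi = (LEAST k. \<exists>M B. card M = k \<and> disentangles N psi M B)"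

end

theory Submission
  imports Defs "Jordan_Normal_Form.Determinant"
begin

lemma col_orth:
  assumes ob: "orthonormal_basis N b" and xy: "x < N" "y < N"
  shows "(\<Sum>j<N. b j x * cnj (b j y)) = (if x = y then 1 else 0)"
proof -
  define A :: "complex mat" where "A = Matrix.mat N N (\<lambda>(j,i). cnj (b j i))"
  define C :: "complex mat" where "C = Matrix.mat N N (\<lambda>(i,k). b k i)"
  have A: "A \<in> carrier_mat N N" and C: "C \<in> carrier_mat N N" by (auto simp: A_def C_def)
  have "A * C = 1\<^sub>m N"
  proof (rule eq_matI)
    fix j k assume jk: "j < dim_row (1\<^sub>m N)" "k < dim_col (1\<^sub>m N)"
    hence "(A * C) $$ (j, k) = (\<Sum>i<N. cnj (b j i) * b k i)"
      by (simp add: A_def C_def scalar_prod_def lessThan_atLeast0)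
    also have "\<dots> = 1\<^sub>m N $$ (j, k)" using ob jk by (simp add: orthonormal_basis_def)
    finally show "(A * C) $$ (j, k) = 1\<^sub>m N $$ (j, k)" .
  qed (auto simp: A_def C_def)
  hence CA: "C * A = 1\<^sub>m N" using mat_mult_left_right_inverse[OF A C] by simp
  have "(\<Sum>j<N. b j x * cnj (b j y)) = (C * A) $$ (x, y)"
    using xy by (simp add: A_def C_def scalar_prod_def lessThan_atLeast0)
  also have "\<dots> = (if x = y then 1 else 0)" using CA xy by simp
  finally show ?thesis .
qed

definition swp :: "nat \<Rightarrow> nat \<Rightarrow> nat list \<Rightarrow> nat list" where
  "swp a b xs = map (\<lambda>i. xs ! (Transposition.transpose a b i)) [0..<length xs]"

lemma length_swp[simp]: "length (swp a b xs) = length xs"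
  by (simp add: swp_def)

lemma nth_swp: "i < length xs \<Longrightarrow> swp a b xs ! i = xs ! (Transposition.transpose a b i)"
  by (simp add: swp_def)

lemma transpose_lt: "a < n \<Longrightarrow> b < n \<Longrightarrow> i < n \<Longrightarrow> Transposition.transpose a b i < n"
  by (simp add: Transposition.transpose_def)

lemma swp_swp: "a < length xs \<Longrightarrow> b < length xs \<Longrightarrow> swp a b (swp a b xs) = xs"
  by (rule nth_equalityI) (auto simp: nth_swp transpose_lt)

lemma swp_idx: "xs \<in> idx N \<Longrightarrow> a < N \<Longrightarrow> b < N \<Longrightarrow> swp a b xs \<in> idx N"
  unfolding idx_def
  by (auto simp: swp_def) (metis lessThan_iff nth_mem subsetD transpose_lt)

lemma ket_swp:
  assumes "a < N" "b < N"
  shows "ket (map p [0..<N]) (swp a b xs) = ket (map (p \<circ> Transposition.transpose a b) [0..<N]) xs"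
proof -
  have "(swp a b xs = map p [0..<N]) \<longleftrightarrow> (xs = map (p \<circ> Transposition.transpose a b) [0..<N])"
  proof
    assume h: "swp a b xs = map p [0..<N]"
    hence l: "length xs = N" by (metis length_map length_swp length_upt minus_nat.diff_0)
    show "xs = map (p \<circ> Transposition.transpose a b) [0..<N]"
    proof (rule nth_equalityI)
      fix i assume "i < length xs"
      hence "xs ! i = swp a b xs ! (Transposition.transpose a b i)"
        using assms l by (simp add: nth_swp transpose_lt)
      also have "\<dots> = p (Transposition.transpose a b i)" using h assms l \<open>i < length xs\<close> by (simp add: transpose_lt)
      finally show "xs ! i = map (p \<circ> Transposition.transpose a b) [0..<N] ! i" using l \<open>i < length xs\<close> by simp
    qed (simp add: l)
  next
    assume h: "xs = map (p \<circ> Transposition.transpose a b) [0..<N]"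
    show "swp a b xs = map p [0..<N]"
      by (rule nth_equalityI) (auto simp: h nth_swp assms transpose_lt)
  qed
  thus ?thesis by (simp add: ket_def)
qed

lemma singlet_swp:
  assumes "a < N" "b < N" "a \<noteq> b"
  shows "singlet N (swp a b xs) = - singlet N xs"
proof -
  let ?t = "Transposition.transpose a b"
  let ?P = "{p. p permutes {..<N}}"
  have tP: "?t permutes {..<N}" using assms by (simp add: permutes_swap_id)
  have "(\<Sum>p\<in>?P. of_int (sign p) * ket (map p [0..<N]) (swp a b xs))
      = (\<Sum>p\<in>?P. of_int (sign p) * ket (map (p \<circ> ?t) [0..<N]) xs)"
    using assms by (simp add: ket_swp)
  also have "\<dots> = (\<Sum>q\<in>?P. - (of_int (sign q) * ket (map q [0..<N]) xs) :: complex)"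
  proof (rule sum.reindex_bij_witness[of _ "\<lambda>q. q \<circ> ?t" "\<lambda>p. p \<circ> ?t"])
    fix p assume "p \<in> ?P"
    hence pp: "p permutes {..<N}" by simp
    show "p \<circ> ?t \<circ> ?t = p" by (simp add: comp_assoc)
    show "p \<circ> ?t \<in> ?P" using pp tP by (simp add: permutes_compose)
    show "- (of_int (sign (p \<circ> ?t)) * ket (map (p \<circ> ?t) [0..<N]) xs) =
          of_int (sign p) * ket (map (p \<circ> ?t) [0..<N]) xs"
    proof -
      have "sign (p \<circ> ?t) = sign p * sign ?t"
        using pp tP by (meson permutes_imp_permutation finite_lessThan sign_compose)
      also have "\<dots> = - sign p" using assms by (simp add: sign_swap_id)
      finally show ?thesis by simp
    qed
  next
    fix p assume "p \<in> ?P"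
    hence pp: "p permutes {..<N}" by simp
    show "p \<circ> ?t \<circ> ?t = p" by (simp add: comp_assoc)
    show "p \<circ> ?t \<in> ?P" using pp tP by (simp add: permutes_compose)
  qed
  also have "\<dots> = - (\<Sum>q\<in>?P. of_int (sign q) * ket (map q [0..<N]) xs)"
    by (simp add: sum_negf)
  finally show ?thesis by (simp add: singlet_def)
qed

lemma singlet_nonzero: "singlet N [0..<N] \<noteq> 0"
proof -
  let ?P = "{p. p permutes {..<N}}"
  have "(\<Sum>p\<in>?P. of_int (sign p) * ket (map p [0..<N]) [0..<N])
      = (\<Sum>p\<in>?P. if p = id then 1 else 0 :: complex)"
  proof (rule sum.cong)
    fix p assume "p \<in> ?P"
    hence pp: "p permutes {..<N}" by simp
    have "map p [0..<N] = [0..<N] \<longleftrightarrow> p = id"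
    proof
      assume h: "map p [0..<N] = [0..<N]"
      show "p = id"
      proof
        fix i show "p i = id i"
        proof (cases "i < N")
          case True
          then show ?thesis using arg_cong[OF h, of "\<lambda>l. l ! i"] by simp
        next
          case False
          then show ?thesis using pp by (simp add: permutes_def)
        qed
      qed
    qed simp
    thus "of_int (sign p) * ket (map p [0..<N]) [0..<N] = (if p = id then 1 else 0)"
      by (auto simp: ket_def)
  qed simp
  also have "\<dots> = 1" using permutes_id[of "{..<N}"] finite_permutations[of "{..<N}"]
    by (simp add: sum.delta)
  finally show ?thesis by (simp add: singlet_def)
qed

lemma transpose_notin: "i \<notin> M \<Longrightarrow> a \<notin> M \<Longrightarrow> b \<notin> M \<Longrightarrow> Transposition.transpose a b i \<notin> M"
  by (auto simp: Transposition.transpose_def)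

lemma transpose_in: "q \<in> M \<Longrightarrow> a \<notin> M \<Longrightarrow> b \<notin> M \<Longrightarrow> Transposition.transpose a b q = q"
  by (auto simp: Transposition.transpose_def)

lemma post_swp:
  assumes ab: "a < N" "b < N" "a \<notin> M" "b \<notin> M"
    and anti: "\<And>ys. ys \<in> idx N \<Longrightarrow> psi (swp a b ys) = - psi ys"
    and xs: "xs \<in> idx N" and MN: "M \<subseteq> {..<N}"
  shows "post_measure N M B out psi (swp a b xs) = - post_measure N M B out psi xs"
proof -
  let ?t = "Transposition.transpose a b"
  define S where "S zs = {ys\<in>idx N. \<forall>i<N. i \<notin> M \<longrightarrow> ys ! i = zs ! i}" for zs
  have lx: "length xs = N" using xs by (simp add: idx_def)
  have memS: "swp a b ys \<in> S zs" if "ys \<in> S (swp a b zs)" "length zs = N" for ys zs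
  proof -
    have ys: "ys \<in> idx N" and ag: "\<And>i. i < N \<Longrightarrow> i \<notin> M \<Longrightarrow> ys ! i = swp a b zs ! i"
      using that by (auto simp: S_def)
    have ly: "length ys = N" using ys by (simp add: idx_def)
    show ?thesis unfolding S_def
    proof (intro CollectI conjI allI impI)
      show "swp a b ys \<in> idx N" using swp_idx[OF ys ab(1,2)] .
      fix i assume i: "i < N" "i \<notin> M"
      have "swp a b ys ! i = ys ! (?t i)" using i ly by (simp add: nth_swp)
      also have "\<dots> = swp a b zs ! (?t i)"
        using ag[of "?t i"] transpose_lt[OF ab(1,2) i(1)] transpose_notin[OF i(2) ab(3,4)] by simp
      also have "\<dots> = zs ! i" using that(2) ab i by (simp add: nth_swp transpose_lt)
      finally show "swp a b ys ! i = zs ! i" .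
    qed
  qed
  have "post_measure N M B out psi (swp a b xs)
      = (\<Sum>ys\<in>S (swp a b xs). (\<Prod>q\<in>M. B q (out q) (swp a b xs ! q) * cnj (B q (out q) (ys ! q))) * psi ys)"
    by (simp add: post_measure_def S_def)
  also have "\<dots> = (\<Sum>ys\<in>S xs. - ((\<Prod>q\<in>M. B q (out q) (xs ! q) * cnj (B q (out q) (ys ! q))) * psi ys))"
  proof (rule sum.reindex_bij_witness[of _ "swp a b" "swp a b"])
    fix ys assume h: "ys \<in> S (swp a b xs)"
    hence ys: "ys \<in> idx N" by (simp add: S_def)
    hence ly: "length ys = N" by (simp add: idx_def)
    show "swp a b (swp a b ys) = ys" using ly ab by (simp add: swp_swp)
    show "swp a b ys \<in> S xs" using memS[OF h lx] .
    have e1: "\<And>q. q \<in> M \<Longrightarrow> swp a b ys ! q = ys ! q" "\<And>q. q \<in> M \<Longrightarrow> swp a b xs ! q = xs ! q"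
      using MN ly lx ab by (auto simp: nth_swp transpose_in)
    show "- ((\<Prod>q\<in>M. B q (out q) (xs ! q) * cnj (B q (out q) (swp a b ys ! q))) * psi (swp a b ys)) =
        (\<Prod>q\<in>M. B q (out q) (swp a b xs ! q) * cnj (B q (out q) (ys ! q))) * psi ys"
      using anti[OF ys] e1 by (simp cong: prod.cong)
  next
    fix ys assume h: "ys \<in> S xs"
    hence ys: "ys \<in> idx N" by (simp add: S_def)
    hence ly: "length ys = N" by (simp add: idx_def)
    show "swp a b (swp a b ys) = ys" using ly ab by (simp add: swp_swp)
    have "S xs = S (swp a b (swp a b xs))" using lx ab by (simp add: swp_swp)
    thus "swp a b ys \<in> S (swp a b xs)" using memS[of ys "swp a b xs"] h lx by simp
  qed
  also have "\<dots> = - post_measure N M B out psi xs"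
    by (simp add: post_measure_def S_def sum_negf)
  finally show ?thesis .
qed

lemma antisym_product_zero:
  assumes ab: "a < N" "b < N" "a \<noteq> b"
    and anti: "\<And>xs. xs \<in> idx N \<Longrightarrow> phi (swp a b xs) = - phi xs"
    and fp: "fully_product N phi"
  shows "\<forall>xs\<in>idx N. phi xs = (0::complex)"
proof (rule ccontr)
  assume "\<not> ?thesis"
  then obtain xs0 where x0: "xs0 \<in> idx N" "phi xs0 \<noteq> 0" by auto
  obtain v where v: "\<And>xs. xs \<in> idx N \<Longrightarrow> phi xs = (\<Prod>i<N. v i (xs ! i))"
    using fp by (auto simp: fully_product_def)
  have l0: "length xs0 = N" using x0 by (simp add: idx_def)
  have nz: "\<And>i. i < N \<Longrightarrow> v i (xs0 ! i) \<noteq> 0"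
    using x0 v[OF x0(1)] by auto
  define xs2 where "xs2 = xs0[a := xs0 ! b]"
  have x2: "xs2 \<in> idx N" using x0 ab l0 unfolding xs2_def idx_def
    by (auto dest!: subsetD[OF set_update_subset_insert]) (meson lessThan_iff nth_mem subsetD)
  have l2: "length xs2 = N" using l0 by (simp add: xs2_def)
  have "swp a b xs2 = xs2"
  proof (rule nth_equalityI)
    fix i assume "i < length (swp a b xs2)"
    thus "swp a b xs2 ! i = xs2 ! i" using ab l0 l2
      by (auto simp: nth_swp xs2_def Transposition.transpose_def)
  qed simp
  hence "phi xs2 = 0" using anti[OF x2] by simp
  hence "(\<Prod>i<N. v i (xs2 ! i)) = 0" using v[OF x2] by simp
  then obtain i where i: "i < N" "v i (xs2 ! i) = 0" by auto
  have "i = a"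
  proof (rule ccontr)
    assume "i \<noteq> a"
    hence "xs2 ! i = xs0 ! i" by (simp add: xs2_def)
    thus False using nz[OF i(1)] i(2) by simp
  qed
  hence va: "v a (xs0 ! b) = 0" using i ab l0 by (simp add: xs2_def)
  have "phi (swp a b xs0) = (\<Prod>i<N. v i (swp a b xs0 ! i))" using v swp_idx[OF x0(1) ab(1,2)] by simp
  also have "\<dots> = 0"
    using ab l0 va by (intro prod_zero) (auto intro!: bexI[of _ a] simp: nth_swp)
  finally show False using anti[OF x0(1)] x0(2) by simp
qed

lemma finite_idx: "finite (idx N)"
proof -
  have "idx N = {xs. set xs \<subseteq> {..<N} \<and> length xs = N}" by (auto simp: idx_def)
  thus ?thesis using finite_lists_length_eq[of "{..<N}" N] by simp
qed

lemma idx_nth_lt: "xs \<in> idx N \<Longrightarrow> q < N \<Longrightarrow> xs ! q < N"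
  unfolding idx_def by (auto intro: subsetD[OF _ nth_mem])

lemma completeness:
  assumes MN: "M \<subseteq> {..<N}"
    and col: "\<And>q x y. q \<in> M \<Longrightarrow> x < N \<Longrightarrow> y < N \<Longrightarrow>
       (\<Sum>j<N. B q j x * cnj (B q j y)) = (if x = y then 1 else 0)"
    and xs: "xs \<in> idx N"
  shows "(\<Sum>out\<in>PiE M (\<lambda>_. {..<N}). post_measure N M B out psi xs) = psi xs"
proof -
  define S where "S = {ys\<in>idx N. \<forall>i<N. i \<notin> M \<longrightarrow> ys ! i = xs ! i}"
  define f where "f q j ys = B q j (xs ! q) * cnj (B q j (ys ! q))" for q j ys
  have fM: "finite M" using MN finite_subset by blast
  have fS: "finite S" using finite_idx by (simp add: S_def)
  have "(\<Sum>out\<in>PiE M (\<lambda>_. {..<N}). post_measure N M B out psi xs)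
     = (\<Sum>out\<in>PiE M (\<lambda>_. {..<N}). \<Sum>ys\<in>S. (\<Prod>q\<in>M. f q (out q) ys) * psi ys)"
    by (simp add: post_measure_def S_def f_def)
  also have "\<dots> = (\<Sum>ys\<in>S. \<Sum>out\<in>PiE M (\<lambda>_. {..<N}). (\<Prod>q\<in>M. f q (out q) ys) * psi ys)"
    by (rule sum.swap)
  also have "\<dots> = (\<Sum>ys\<in>S. (\<Prod>q\<in>M. \<Sum>j<N. f q j ys) * psi ys)"
    by (simp add: sum_distrib_right prod_sum_PiE[OF fM])
  also have "\<dots> = (\<Sum>ys\<in>S. (if ys = xs then psi ys else 0))"
  proof (rule sum.cong)
    fix ys assume ys: "ys \<in> S"
    have yi: "ys \<in> idx N" using ys by (simp add: S_def)
    have "(\<Prod>q\<in>M. \<Sum>j<N. f q j ys) = (\<Prod>q\<in>M. if xs ! q = ys ! q then 1 else 0)"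
    proof (intro prod.cong refl)
      fix q assume q: "q \<in> M"
      hence qN: "q < N" using MN by auto
      show "(\<Sum>j<N. f q j ys) = (if xs ! q = ys ! q then 1 else 0)"
        using col[OF q idx_nth_lt[OF xs qN] idx_nth_lt[OF yi qN]] by (simp add: f_def)
    qed
    also have "\<dots> = (if ys = xs then 1 else 0)"
    proof (cases "ys = xs")
      case True then show ?thesis by simp
    next
      case False
      have "\<exists>q\<in>M. xs ! q \<noteq> ys ! q"
      proof (rule ccontr)
        assume "\<not> ?thesis"
        hence "ys = xs" using ys xs unfolding S_def idx_def
          by (auto intro!: nth_equalityI)
        thus False using False by simp
      qed
      then show ?thesis using False fM by (auto intro: prod_zero)
    qed
    finally show "(\<Prod>q\<in>M. \<Sum>j<N. f q j ys) * psi ys = (if ys = xs then psi ys else 0)" by simp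
  qed simp
  also have "\<dots> = psi xs" using fS xs by (simp add: sum.delta' S_def)
  finally show ?thesis .
qed

lemma std_disentangles:
  assumes N: "N \<ge> 1" and out: "valid_outcomes N {..<N-1} out"
  shows "fully_product N (post_measure N {..<N-1} (\<lambda>q j i. if i = j then 1 else 0) out psi)"
proof -
  let ?M = "{..<N-1}"
  let ?B = "\<lambda>(q::nat) (j::nat) (i::nat). if i = j then 1 else (0::complex)"
  define w where "w z = map (\<lambda>i. if i < N - 1 then out i else z) [0..<N]" for z
  define v where "v i z = (if i < N - 1 then (if z = out i then 1 else 0) else psi (w z))" for i z
  show ?thesis unfolding fully_product_def
  proof (intro exI ballI)
    fix xs assume xs: "xs \<in> idx N"
    have lx: "length xs = N" using xs by (simp add: idx_def)
    define S where "S = {ys\<in>idx N. \<forall>i<N. i \<notin> ?M \<longrightarrow> ys ! i = xs ! i}"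
    have lastN: "\<And>i. i < N \<Longrightarrow> \<not> i < N - 1 \<Longrightarrow> i = N - 1" by linarith
    have wS: "w (xs ! (N-1)) \<in> S"
      using out N idx_nth_lt[OF xs, of "N-1"] unfolding S_def w_def idx_def valid_outcomes_def
      by (auto simp: set_conv_nth) (metis lastN One_nat_def)
    have "post_measure N ?M ?B out psi xs
       = (\<Sum>ys\<in>S. (\<Prod>q\<in>?M. ?B q (out q) (xs ! q) * cnj (?B q (out q) (ys ! q))) * psi ys)"
      by (simp add: post_measure_def S_def)
    also have "\<dots> = (\<Sum>ys\<in>S. if ys = w (xs ! (N-1)) then
        (\<Prod>q\<in>?M. if xs ! q = out q then 1 else 0) * psi ys else 0)"
    proof (rule sum.cong)
      fix ys assume ys: "ys \<in> S"
      have ly: "length ys = N" using ys by (simp add: S_def idx_def)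
      have ylast: "ys ! (N-1) = xs ! (N-1)" using ys N by (simp add: S_def)
      have iff: "(\<forall>q\<in>?M. ys ! q = out q) \<longleftrightarrow> ys = w (xs ! (N-1))"
      proof
        assume h: "\<forall>q\<in>?M. ys ! q = out q"
        show "ys = w (xs ! (N-1))"
        proof (rule nth_equalityI)
          fix i assume "i < length ys"
          thus "ys ! i = w (xs ! (N-1)) ! i" using h ylast ly lastN[of i]
            by (cases "i < N - 1") (auto simp: w_def)
        qed (simp add: ly w_def)
      next
        assume "ys = w (xs ! (N-1))"
        thus "\<forall>q\<in>?M. ys ! q = out q" by (simp add: w_def)
      qed
      have "(\<Prod>q\<in>?M. ?B q (out q) (xs ! q) * cnj (?B q (out q) (ys ! q)))
          = (\<Prod>q\<in>?M. (if xs ! q = out q then 1 else 0) * (if ys ! q = out q then 1 else 0))"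
        by (intro prod.cong) auto
      also have "\<dots> = (\<Prod>q\<in>?M. if xs ! q = out q then 1 else 0) * (\<Prod>q\<in>?M. if ys ! q = out q then 1 else (0::complex))"
        by (rule prod.distrib)
      also have "(\<Prod>q\<in>?M. if ys ! q = out q then 1 else (0::complex)) = (if ys = w (xs ! (N-1)) then 1 else 0)"
        using iff by (auto intro: prod_zero)
      finally show "(\<Prod>q\<in>?M. ?B q (out q) (xs ! q) * cnj (?B q (out q) (ys ! q))) * psi ys =
         (if ys = w (xs ! (N-1)) then (\<Prod>q\<in>?M. if xs ! q = out q then 1 else 0) * psi ys else 0)"
        by simp
    qed simp
    also have "\<dots> = (\<Prod>q\<in>?M. if xs ! q = out q then 1 else 0) * psi (w (xs ! (N-1)))"
      using wS finite_idx by (simp add: sum.delta' S_def)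
    also have "\<dots> = (\<Prod>i<N. v i (xs ! i))"
    proof -
      have e: "{..<N} = insert (N-1) ?M" using N by auto
      have "(\<Prod>i<N. v i (xs ! i)) = v (N-1) (xs ! (N-1)) * (\<Prod>i\<in>?M. v i (xs ! i))"
        by (subst e) (simp add: prod.insert)
      also have "(\<Prod>i\<in>?M. v i (xs ! i)) = (\<Prod>q\<in>?M. if xs ! q = out q then 1 else 0)"
        by (intro prod.cong) (auto simp: v_def)
      finally show ?thesis using N by (simp add: v_def)
    qed
    finally show "post_measure N ?M ?B out psi xs = (\<Prod>i<N. v i (xs ! i))" .
  qed
qed


lemma two_elems:
  assumes "finite A" "card A \<ge> 2"
  obtains a b where "a \<in> A" "b \<in> A" "a \<noteq> b"
proof -
  have "\<not> card A \<le> Suc 0" using assms by simp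
  then show ?thesis using that card_le_Suc0_iff_eq[OF assms(1)] by blast
qed

lemma std_orth: "orthonormal_basis N (\<lambda>j i. if i = j then 1 else 0)"
proof -
  have "(\<Sum>i<N. cnj (if i = j then 1 else 0) * (if i = k then 1 else 0)) = (if j = k then (1::complex) else 0)"
    if "j < N" "k < N" for j k
  proof -
    have "(\<Sum>i<N. cnj (if i = j then 1 else 0) * (if i = k then 1 else 0))
        = (\<Sum>i<N. if i = j then (if j = k then 1 else 0) else (0::complex))"
      by (intro sum.cong) auto
    also have "\<dots> = (if j = k then 1 else 0)" using that by (simp add: sum.delta)
    finally show ?thesis .
  qed
  thus ?thesis by (simp add: orthonormal_basis_def)
qed

theorem mainTheorem7:
  fixes N :: nat
  assumes "N \<ge> 2"
  shows "persistency N (singlet N) = N - 1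
    \<and> (\<forall>M B out. valid_measurements N M B \<and> card M < N - 1 \<and> valid_outcomes N M out
          \<and> nonzero_state N (post_measure N M B out (singlet N))
          \<longrightarrow> \<not> fully_product N (post_measure N M B out (singlet N)))"
proof -
  have second: "\<not> fully_product N (post_measure N M B out (singlet N))"
    if vm: "valid_measurements N M B" and cM: "card M < N - 1"
      and nz: "nonzero_state N (post_measure N M B out (singlet N))" for M B out
  proof
    assume fp: "fully_product N (post_measure N M B out (singlet N))"
    have MN: "M \<subseteq> {..<N}" using vm by (simp add: valid_measurements_def)
    have fM: "finite M" using MN finite_subset by blast
    have "card ({..<N} - M) = N - card M" using MN fM by (simp add: card_Diff_subset)
    hence "card ({..<N} - M) \<ge> 2" using cM by simp
    then obtain a b where ab: "a \<in> {..<N} - M" "b \<in> {..<N} - M" "a \<noteq> b"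
      using two_elems[of "{..<N} - M"] by blast
    have anti: "post_measure N M B out (singlet N) (swp a b xs) = - post_measure N M B out (singlet N) xs"
      if "xs \<in> idx N" for xs
      using ab that MN by (intro post_swp) (auto simp: singlet_swp)
    have "\<forall>xs\<in>idx N. post_measure N M B out (singlet N) xs = 0"
      using ab anti fp by (intro antisym_product_zero[of a N b]) auto
    thus False using nz by (simp add: nonzero_state_def)
  qed
  have z: "[0..<N] \<in> idx N" by (auto simp: idx_def)
  have pers: "persistency N (singlet N) = N - 1"
    unfolding persistency_def
  proof (rule Least_equality)
    let ?B = "\<lambda>(q::nat) (j::nat) (i::nat). if i = j then 1 else (0::complex)"
    show "\<exists>M B. card M = N - 1 \<and> disentangles N (singlet N) M B"
    proof (intro exI conjI)
      show "card {..<N-1} = N - 1" by simp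
      show "disentangles N (singlet N) {..<N-1} ?B"
        unfolding disentangles_def valid_measurements_def
      proof (intro conjI allI impI ballI)
        show "{..<N-1} \<subseteq> {..<N}" by auto
        fix q show "orthonormal_basis N (?B q)" by (rule std_orth)
      next
        fix out assume "valid_outcomes N {..<N-1} out"
        thus "fully_product N (post_measure N {..<N-1} ?B out (singlet N))"
          using assms by (intro std_disentangles) auto
      qed
    qed
  next
    fix k assume "\<exists>M B. card M = k \<and> disentangles N (singlet N) M B"
    then obtain M B where k: "card M = k" and d: "disentangles N (singlet N) M B" by blast
    show "N - 1 \<le> k"
    proof (rule ccontr)
      assume "\<not> N - 1 \<le> k"
      hence cM: "card M < N - 1" using k by simp
      have vm: "valid_measurements N M B" using d by (simp add: disentangles_def)
      hence MN: "M \<subseteq> {..<N}" and ob: "\<And>q. q \<in> M \<Longrightarrow> orthonormal_basis N (B q)"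
        by (auto simp: valid_measurements_def)
      have "\<exists>out\<in>PiE M (\<lambda>_. {..<N}). nonzero_state N (post_measure N M B out (singlet N))"
      proof (rule ccontr)
        assume "\<not> ?thesis"
        hence "\<And>out. out \<in> PiE M (\<lambda>_. {..<N}) \<Longrightarrow> post_measure N M B out (singlet N) [0..<N] = 0"
          using z by (auto simp: nonzero_state_def)
        hence "(\<Sum>out\<in>PiE M (\<lambda>_. {..<N}). post_measure N M B out (singlet N) [0..<N]) = 0"
          by simp
        moreover have "(\<Sum>out\<in>PiE M (\<lambda>_. {..<N}). post_measure N M B out (singlet N) [0..<N]) = singlet N [0..<N]"
          using MN z by (intro completeness) (simp_all add: col_orth ob)
        ultimately show False using singlet_nonzero by simp
      qed
      then obtain out where out: "out \<in> PiE M (\<lambda>_. {..<N})"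
        and nz: "nonzero_state N (post_measure N M B out (singlet N))" by blast
      have "valid_outcomes N M out" using out by (auto simp: valid_outcomes_def)
      hence "fully_product N (post_measure N M B out (singlet N))" using d by (simp add: disentangles_def)
      thus False using second[OF vm cM nz] by simp
    qed
  qed
  show ?thesis using pers second by blast
qed

end
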